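(* Let $\hbar>0$, let $N\ge1$ and times $t_1<t_2<\dots<t_N<t_{N+1}\equiv t_D$. Consider two arms $\gamma\in\{\alpha,\beta\}$ with data, for $i=1,\dots,N$: masses $m_{\gamma i}>0$, wave vectors $k_{\gamma i}\in\mathbb{R}^3$ (possibly zero), frequencies $\omega_{\gamma i}\in\mathbb{R}$ and laser phases $\varphi_{\gamma i}\in\mathbb{R}$, and initial data $(q_{\gamma 1},p_{\gamma 1})\in\mathbb{R}^3\times\mathbb{R}^3$. Define recursively, for $i=1,\dots,N$, $(q_{\gamma,i+1},p_{\gamma,i+1})$ as the position and momentum at time $t_{i+1}$ of the classical trajectory of mass $m_{\gamma i}$ (Hamiltonian $H_{m_{\gamma i}}$ of the context) which is at $(q_{\gamma i},p_{\gamma i}+\hbar k_{\gamma i})$ at time $t_i$; write $q_{\gamma D}=q_{\gamma,N+1}$, $p_{\gamma D}=p_{\gamma,N+1}$, and $S_{\gamma i}=S_{cl}(t_{i+1},t_i,q_{\gamma i},p_{\gamma i}+\hbar k_{\gamma i},m_{\gamma i})$. Let $X_D,Y_D$ be complex $3\times 3$ matrices with $X_D$ invertible, and let $\Delta\phi(q,t_D)=\Phi_\beta(q)-\Phi_\alpha(q)$ with $\Phi_\gamma$ as in the context. Then for every $q\in\mathbb{R}^3$, \[ \begin{aligned} \Delta\phi(q,t_D)={}&(p_{\beta D}-p_{\alpha D})\cdot\Big(q-\frac{q_{\alpha D}+q_{\beta D}}{2}\Big)/\hbar-\frac{p_{\alpha 1}+p_{\beta 1}}{2\hbar}\cdot(q_{\beta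 1}-q_{\alpha 1})\\ &+\sum_{i=1}^N\Big[(k_{\beta i}-k_{\alpha i})\cdot\frac{q_{\alpha i}+q_{\beta i}}{2}-(\omega_{\beta i}-\omega_{\alpha i})\,t_i-(\varphi_{\beta i}-\varphi_{\alpha i})\Big]\\ &+\sum_{i=1}^N\Big(\frac{m_{\beta i}}{m_{\alpha i}}-1\Big)\Big[\frac{S_{\alpha i}}{\hbar}+\frac{p_{\alpha,i+1}}{2\hbar}\cdot(q_{\beta,i+1}-q_{\alpha,i+1})-\frac{p_{\alpha i}+\hbar k_{\alpha i}}{2\hbar}\cdot(q_{\beta i}-q_{\alpha i})\Big]\\ &+\frac{m_{\beta N}}{2\hbar}(q-q_{\beta D})\cdot\mathrm{Re}(Y_DX_D^{-1})(q-q_{\beta D})-\frac{m_{\alpha N}}{2\hbar}(q-q_{\alpha D})\cdot\mathrm{Re}(Y_DX_D^{-1})(q-q_{\alpha D}). \end{aligned} \]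
   Context: For a particle of mass $m>0$ with position $q\in\mathbb{R}^3$ and momentum $p\in\mathbb{R}^3$, the external Hamiltonian is \[ H_m(q,p,t)=\frac{1}{2m}\,p\cdot G(t)\,p-\frac{m}{2}\,q\cdot\Gamma(t)\,q-\Omega(t)\cdot(q\times p)-m\,g(t)\cdot q, \] with $G(t)$ continuous real symmetric invertible $3\times3$ matrices, $\Gamma(t)$ continuous real symmetric $3\times3$ matrices, $\Omega(t),g(t)\in\mathbb{R}^3$ continuous, the same for all masses. Classical trajectories solve Hamilton's equations for $H_m$, and $S_{cl}(s',s,q_0,p_0,m)=\int_s^{s'}(p\cdot\dot q-H_m)\,dt$ along the classical trajectory of mass $m$ starting at $(q_0,p_0)$ at time $s$. Model of the interferometer (Gaussian wave packets, beam splitters acting as the factor $e^{-i(\omega t_i-k\cdot q_{i}+\varphi)}$ at the interaction point $(t_i,q_i)$ and imparting momentum $\hbar k$, common complex width parameters $X_D,Y_D$ at detection): the output phase of arm $\gamma$ at position $q$ and time $t_D$ is \[ \Phi_\gamma(q)=\sum_{i=1}^N\Big[\frac{S_{\gamma i}}{\hbar}+k_{\gamma i}\cdot q_{\gamma i}-\omega_{\gamma i}t_i-\varphi_{\gamma i}\Big]+\frac{p_{\gamma D}\cdot(q-q_{\gamma D})}{\hbar}+\frac{m_{\gamma N}}{2\hbar}(q-q_{\gamma D})\cdot\mathrm{Re}(Y_DX_D^{-1})(q-q_{\gamma D}), \] and $\Delta\phi(q,t_D)=\Phi_\beta(q)-\Phi_\alpha(q)$ is the interferometer phase shift. A dot denotes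 the Euclidean inner product; $\mathrm{Re}$ is the entrywise real part. *)

theory Defs
  imports "HOL-Analysis.Analysis"
begin

definition hamiltonian ::
  "(real \<Rightarrow> real^3^3) \<Rightarrow> (real \<Rightarrow> real^3^3) \<Rightarrow> (real \<Rightarrow> real^3) \<Rightarrow> (real \<Rightarrow> real^3)
   \<Rightarrow> real \<Rightarrow> real^3 \<Rightarrow> real^3 \<Rightarrow> real \<Rightarrow> real" where
  "hamiltonian G Gam Om g m q p t =
     (1 / (2 * m)) * (p \<bullet> (G t *v p)) - (m / 2) * (q \<bullet> (Gam t *v q))
     - Om t \<bullet> cross3 q p - m * (g t \<bullet> q)"

definition admissible_fields ::
  "(real \<Rightarrow> real^3^3) \<Rightarrow> (real \<Rightarrow> real^3^3) \<Rightarrow> (real \<Rightarrow> real^3) \<Rightarrow> (real \<Rightarrow> real^3) \<Rightarrow> bool" where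
  "admissible_fields G Gam Om g \<longleftrightarrow>
     continuous_on UNIV G \<and> continuous_on UNIV Gam \<and> continuous_on UNIV Om \<and> continuous_on UNIV g \<and>
     (\<forall>t. transpose (G t) = G t \<and> invertible (G t) \<and> transpose (Gam t) = Gam t)"

definition hamilton_solution ::
  "(real \<Rightarrow> real^3^3) \<Rightarrow> (real \<Rightarrow> real^3^3) \<Rightarrow> (real \<Rightarrow> real^3) \<Rightarrow> (real \<Rightarrow> real^3)
   \<Rightarrow> real \<Rightarrow> (real \<Rightarrow> (real^3) \<times> (real^3)) \<Rightarrow> bool" where
  "hamilton_solution G Gam Om g m x \<longleftrightarrow>
     (\<forall>t. \<exists>dq dp.
        ((\<lambda>\<tau>. fst (x \<tau>)) has_vector_derivative dq) (at t) \<and>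
        ((\<lambda>\<tau>. snd (x \<tau>)) has_vector_derivative dp) (at t) \<and>
        ((\<lambda>p. hamiltonian G Gam Om g m (fst (x t)) p t) has_derivative (\<lambda>v. dq \<bullet> v)) (at (snd (x t))) \<and>
        ((\<lambda>q. hamiltonian G Gam Om g m q (snd (x t)) t) has_derivative (\<lambda>v. - (dp \<bullet> v))) (at (fst (x t))))"

definition classical_action ::
  "(real \<Rightarrow> real^3^3) \<Rightarrow> (real \<Rightarrow> real^3^3) \<Rightarrow> (real \<Rightarrow> real^3) \<Rightarrow> (real \<Rightarrow> real^3)
   \<Rightarrow> real \<Rightarrow> (real \<Rightarrow> (real^3) \<times> (real^3)) \<Rightarrow> real \<Rightarrow> real \<Rightarrow> real" where
  "classical_action G Gam Om g m x s s' =
     integral {s..s'} (\<lambda>t. snd (x t) \<bullet> vector_derivative (\<lambda>\<tau>. fst (x \<tau>)) (at t)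
                          - hamiltonian G Gam Om g m (fst (x t)) (snd (x t)) t)"

definition Re_mat :: "complex^3^3 \<Rightarrow> real^3^3" where
  "Re_mat A = (\<chi> i j. Re (A $ i $ j))"

text \<open>Output phase Phi_gamma(q) of one arm (indices i = 1..N; index N+1 = detection D).
  S i is the action of segment i, q i / p i the positions/momenta before the kick at t i.\<close>
definition output_phase ::
  "real \<Rightarrow> nat \<Rightarrow> (nat \<Rightarrow> real) \<Rightarrow> (nat \<Rightarrow> real) \<Rightarrow> (nat \<Rightarrow> real^3) \<Rightarrow> (nat \<Rightarrow> real)
   \<Rightarrow> (nat \<Rightarrow> real) \<Rightarrow> (nat \<Rightarrow> real) \<Rightarrow> (nat \<Rightarrow> real^3) \<Rightarrow> (nat \<Rightarrow> real^3)
   \<Rightarrow> complex^3^3 \<Rightarrow> complex^3^3 \<Rightarrow> real^3 \<Rightarrow> real" where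
  "output_phase hbar N t m k \<omega> \<phi> S q p XD YD r =
     (\<Sum>i=1..N. S i / hbar + k i \<bullet> q i - \<omega> i * t i - \<phi> i)
     + (p (N+1) \<bullet> (r - q (N+1))) / hbar
     + m N / (2 * hbar) * ((r - q (N+1)) \<bullet> (Re_mat (YD ** matrix_inv XD) *v (r - q (N+1))))"

end

theory Submission
  imports Defs
begin

lemma inner_fun_eq: "(\<lambda>v. (a::real^3) \<bullet> v) = (\<lambda>v. b \<bullet> v) \<Longrightarrow> a = b"
proof -
  assume h: "(\<lambda>v. (a::real^3) \<bullet> v) = (\<lambda>v. b \<bullet> v)"
  then have "a \<bullet> (a - b) = b \<bullet> (a - b)" by metis
  then have "(a - b) \<bullet> (a - b) = 0" by (simp add: inner_diff)
  then show ?thesis by simp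
qed

lemma sym_inner: assumes "transpose A = (A::real^3^3)" shows "x \<bullet> (A *v y) = y \<bullet> (A *v x)"
  by (metis assms dot_lmul_matrix inner_commute vector_transpose_matrix)

lemma grad_p:
  assumes "transpose (G t) = G t" "m \<noteq> 0"
  shows "((\<lambda>p. hamiltonian G Gam Om g m q p t) has_derivative
          (\<lambda>v. ((1/m) *\<^sub>R (G t *v p0) - cross3 (Om t) q) \<bullet> v)) (at p0)"
proof -
  have e: "(\<lambda>p. hamiltonian G Gam Om g m q p t) = (\<lambda>p. (1 / (2 * m)) * (p \<bullet> (G t *v p)) - (m / 2) * (q \<bullet> (Gam t *v q))
     - cross3 (Om t) q \<bullet> p - m * (g t \<bullet> q))"
    unfolding hamiltonian_def by (auto simp: cross3_simps)
  have d1: "((\<lambda>p. p \<bullet> (G t *v p)) has_derivative (\<lambda>h. p0 \<bullet> (G t *v h) + h \<bullet> (G t *v p0))) (at p0)"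
    by (rule has_derivative_inner[OF has_derivative_ident bounded_linear_imp_has_derivative]) simp
  have d2: "(((\<bullet>) (cross3 (Om t) q)) has_derivative ((\<bullet>) (cross3 (Om t) q))) (at p0)"
    by (rule bounded_linear_imp_has_derivative) (simp add: bounded_linear_inner_right)
  have d: "((\<lambda>p. (1 / (2 * m)) * (p \<bullet> (G t *v p)) - (m / 2) * (q \<bullet> (Gam t *v q))
     - cross3 (Om t) q \<bullet> p - m * (g t \<bullet> q)) has_derivative (\<lambda>h. (1 / (2 * m)) * (p0 \<bullet> (G t *v h) + h \<bullet> (G t *v p0)) - 0 - cross3 (Om t) q \<bullet> h - 0)) (at p0)"
    by (intro has_derivative_diff has_derivative_mult_right d1 d2 has_derivative_const)
  show ?thesis unfolding e
    apply (rule has_derivative_eq_rhs[OF d])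
    using assms by (intro ext) (auto simp: sym_inner[OF assms(1), of p0] inner_diff_left inner_diff_right inner_commute field_simps)
qed

lemma grad_q:
  assumes "transpose (Gam t) = Gam t"
  shows "((\<lambda>q. hamiltonian G Gam Om g m q p t) has_derivative
          (\<lambda>v. - ((m *\<^sub>R (Gam t *v q0) + cross3 p (Om t) + m *\<^sub>R g t) \<bullet> v))) (at q0)"
proof -
  have e: "(\<lambda>q. hamiltonian G Gam Om g m q p t) = (\<lambda>q. (1 / (2 * m)) * (p \<bullet> (G t *v p)) - (m / 2) * (q \<bullet> (Gam t *v q))
     - cross3 p (Om t) \<bullet> q - m * (g t \<bullet> q))"
    unfolding hamiltonian_def by (auto simp: cross3_simps)
  have d1: "((\<lambda>q. q \<bullet> (Gam t *v q)) has_derivative (\<lambda>h. q0 \<bullet> (Gam t *v h) + h \<bullet> (Gam t *v q0))) (at q0)"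
    by (rule has_derivative_inner[OF has_derivative_ident bounded_linear_imp_has_derivative]) simp
  have d2: "(((\<bullet>) (cross3 p (Om t))) has_derivative ((\<bullet>) (cross3 p (Om t)))) (at q0)"
    by (rule bounded_linear_imp_has_derivative) (simp add: bounded_linear_inner_right)
  have d3: "(((\<bullet>) (g t)) has_derivative ((\<bullet>) (g t))) (at q0)"
    by (rule bounded_linear_imp_has_derivative) (simp add: bounded_linear_inner_right)
  have d: "((\<lambda>q. (1 / (2 * m)) * (p \<bullet> (G t *v p)) - (m / 2) * (q \<bullet> (Gam t *v q))
     - cross3 p (Om t) \<bullet> q - m * (g t \<bullet> q)) has_derivative (\<lambda>h. 0 - (m / 2) * (q0 \<bullet> (Gam t *v h) + h \<bullet> (Gam t *v q0)) - cross3 p (Om t) \<bullet> h - m * (g t \<bullet> h))) (at q0)"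
    by (intro has_derivative_diff has_derivative_mult_right d1 d2 d3 has_derivative_const)
  show ?thesis unfolding e
    apply (rule has_derivative_eq_rhs[OF d])
    using assms by (intro ext) (auto simp: sym_inner[OF assms(1), of q0] inner_add_left inner_add_right inner_commute field_simps)
qed
lemma sym3: assumes "transpose A = (A::real^3^3)"
  shows "A$1$2 = A$2$1" "A$1$3 = A$3$1" "A$2$3 = A$3$2"
  using assms unfolding transpose_def vec_eq_iff by auto

lemma alg_L:
  assumes sG: "transpose G = (G::real^3^3)" and sGm: "transpose Gam = (Gam::real^3^3)" and m: "m \<noteq> 0"
    and dq: "dq = (1/m) *\<^sub>R (G *v p) - cross3 Om q"
    and dp: "dp = m *\<^sub>R (Gam *v q) + cross3 p Om + m *\<^sub>R gg"
  shows "p \<bullet> dq - ((1 / (2 * m)) * (p \<bullet> (G *v p)) - (m / 2) * (q \<bullet> (Gam *v q))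
     - Om \<bullet> cross3 q p - m * (gg \<bullet> q)) = (dp \<bullet> q + p \<bullet> dq) / 2 + (m/2) * (gg \<bullet> q)"
  using m sym3[OF sG] sym3[OF sGm] unfolding dq dp
  by (simp add: inner_vec_def sum_3 matrix_vector_mult_def cross3_def field_simps)

lemma alg_F:
  assumes sG: "transpose G = (G::real^3^3)" and sGm: "transpose Gam = (Gam::real^3^3)" and ma: "ma \<noteq> 0" and mb: "mb \<noteq> 0"
    and dqa: "dqa = (1/ma) *\<^sub>R (G *v pa) - cross3 Om qa"
    and dpa: "dpa = ma *\<^sub>R (Gam *v qa) + cross3 pa Om + ma *\<^sub>R gg"
    and dqb: "dqb = (1/mb) *\<^sub>R (G *v pb) - cross3 Om qb"
    and dpb: "dpb = mb *\<^sub>R (Gam *v qb) + cross3 pb Om + mb *\<^sub>R gg"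
  shows "(((mb/ma) *\<^sub>R dpa + dpb) \<bullet> (qb - qa) + ((mb/ma) *\<^sub>R pa + pb) \<bullet> (dqb - dqa)) / 2
    = (pb \<bullet> dqb - ((1 / (2 * mb)) * (pb \<bullet> (G *v pb)) - (mb / 2) * (qb \<bullet> (Gam *v qb))
     - Om \<bullet> cross3 qb pb - mb * (gg \<bullet> qb)))
    - (mb/ma) * (pa \<bullet> dqa - ((1 / (2 * ma)) * (pa \<bullet> (G *v pa)) - (ma / 2) * (qa \<bullet> (Gam *v qa))
     - Om \<bullet> cross3 qa pa - ma * (gg \<bullet> qa)))"
  using ma mb sym3[OF sG] sym3[OF sGm] unfolding dqa dpa dqb dpb
  by (simp add: inner_vec_def sum_3 matrix_vector_mult_def cross3_def field_simps)

lemma hvd_inner: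
  assumes "(f has_vector_derivative f') (at t)" "(g has_vector_derivative g') (at t)"
  shows "((\<lambda>x. (f x::real^3) \<bullet> g x) has_vector_derivative (f t \<bullet> g' + f' \<bullet> g t)) (at t)"
proof -
  have "((\<lambda>x. f x \<bullet> g x) has_derivative (\<lambda>h. f t \<bullet> (h *\<^sub>R g') + (h *\<^sub>R f') \<bullet> g t)) (at t)"
    using assms unfolding has_vector_derivative_def by (intro has_derivative_inner) auto
  then show ?thesis unfolding has_vector_derivative_def
    by (rule has_derivative_eq_rhs) (auto simp: algebra_simps)
qed

lemma traj_deriv:
  assumes F: "admissible_fields G Gam Om g" and m: "m \<noteq> 0" and H: "hamilton_solution G Gam Om g m x"
  shows "((\<lambda>\<tau>. fst (x \<tau>)) has_vector_derivative ((1/m) *\<^sub>R (G t *v snd (x t)) - cross3 (Om t) (fst (x t)))) (at t)"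
    and "((\<lambda>\<tau>. snd (x \<tau>)) has_vector_derivative (m *\<^sub>R (Gam t *v fst (x t)) + cross3 (snd (x t)) (Om t) + m *\<^sub>R g t)) (at t)"
proof -
  from F have sG: "transpose (G t) = G t" and sGm: "transpose (Gam t) = Gam t"
    unfolding admissible_fields_def by auto
  from H obtain dq dp where d1: "((\<lambda>\<tau>. fst (x \<tau>)) has_vector_derivative dq) (at t)"
    and d2: "((\<lambda>\<tau>. snd (x \<tau>)) has_vector_derivative dp) (at t)"
    and d3: "((\<lambda>p. hamiltonian G Gam Om g m (fst (x t)) p t) has_derivative (\<lambda>v. dq \<bullet> v)) (at (snd (x t)))"
    and d4: "((\<lambda>q. hamiltonian G Gam Om g m q (snd (x t)) t) has_derivative (\<lambda>v. - (dp \<bullet> v))) (at (fst (x t)))"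
    unfolding hamilton_solution_def by blast
  have "(\<lambda>v. dq \<bullet> v) = (\<lambda>v. ((1/m) *\<^sub>R (G t *v snd (x t)) - cross3 (Om t) (fst (x t))) \<bullet> v)"
    by (rule has_derivative_unique[OF d3 grad_p[where G=G and t=t, OF sG m]])
  then have "dq = (1/m) *\<^sub>R (G t *v snd (x t)) - cross3 (Om t) (fst (x t))" by (rule inner_fun_eq)
  then show "((\<lambda>\<tau>. fst (x \<tau>)) has_vector_derivative ((1/m) *\<^sub>R (G t *v snd (x t)) - cross3 (Om t) (fst (x t)))) (at t)"
    using d1 by simp
  have "(\<lambda>v. - (dp \<bullet> v)) = (\<lambda>v. - ((m *\<^sub>R (Gam t *v fst (x t)) + cross3 (snd (x t)) (Om t) + m *\<^sub>R g t) \<bullet> v))"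
    by (rule has_derivative_unique[OF d4 grad_q[where Gam=Gam and t=t, OF sGm]])
  then have "(\<lambda>v. dp \<bullet> v) = (\<lambda>v. (m *\<^sub>R (Gam t *v fst (x t)) + cross3 (snd (x t)) (Om t) + m *\<^sub>R g t) \<bullet> v)"
    by (simp add: fun_eq_iff)
  then have "dp = m *\<^sub>R (Gam t *v fst (x t)) + cross3 (snd (x t)) (Om t) + m *\<^sub>R g t" by (rule inner_fun_eq)
  then show "((\<lambda>\<tau>. snd (x \<tau>)) has_vector_derivative (m *\<^sub>R (Gam t *v fst (x t)) + cross3 (snd (x t)) (Om t) + m *\<^sub>R g t)) (at t)"
    using d2 by simp
qed

definition Lag where
  "Lag G Gam Om g m x t = snd (x t) \<bullet> vector_derivative (\<lambda>\<tau>. fst (x \<tau>)) (at t)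
                          - hamiltonian G Gam Om g m (fst (x t)) (snd (x t)) t"

lemma ca_Lag: "classical_action G Gam Om g m x s s' = integral {s..s'} (Lag G Gam Om g m x)"
  unfolding classical_action_def Lag_def[abs_def] by simp

lemma Lag_integrable:
  assumes F: "admissible_fields G Gam Om g" and m: "m \<noteq> 0" and H: "hamilton_solution G Gam Om g m x"
  shows "Lag G Gam Om g m x integrable_on {s..s'}"
proof -
  define dq where "dq t = (1/m) *\<^sub>R (G t *v snd (x t)) - cross3 (Om t) (fst (x t))" for t
  define dp where "dp t = m *\<^sub>R (Gam t *v fst (x t)) + cross3 (snd (x t)) (Om t) + m *\<^sub>R g t" for t
  have D1: "\<And>t. ((\<lambda>\<tau>. fst (x \<tau>)) has_vector_derivative dq t) (at t)"
    unfolding dq_def by (rule traj_deriv(1)[OF F m H])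
  have D2: "\<And>t. ((\<lambda>\<tau>. snd (x \<tau>)) has_vector_derivative dp t) (at t)"
    unfolding dp_def by (rule traj_deriv(2)[OF F m H])
  have sG: "\<And>t. transpose (G t) = G t" and sGm: "\<And>t. transpose (Gam t) = Gam t"
    and cg: "continuous_on UNIV g"
    using F unfolding admissible_fields_def by auto
  have eq: "Lag G Gam Om g m x t = (dp t \<bullet> fst (x t) + snd (x t) \<bullet> dq t) / 2 + (m/2) * (g t \<bullet> fst (x t))" for t
    unfolding Lag_def vector_derivative_at[OF D1] hamiltonian_def
    by (rule alg_L[OF sG sGm m]) (simp_all add: dq_def dp_def)
  have K: "((\<lambda>t. snd (x t) \<bullet> fst (x t) / 2) has_vector_derivative ((dp t \<bullet> fst (x t) + snd (x t) \<bullet> dq t) / 2)) (at t)" for t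
  proof -
    have "((\<lambda>t. snd (x t) \<bullet> fst (x t)) has_vector_derivative (snd (x t) \<bullet> dq t + dp t \<bullet> fst (x t))) (at t)"
      by (rule hvd_inner[OF D2 D1])
    then have "((\<lambda>t. (1/2) * (snd (x t) \<bullet> fst (x t))) has_vector_derivative (1/2) * (snd (x t) \<bullet> dq t + dp t \<bullet> fst (x t))) (at t)"
      by (rule has_vector_derivative_mult_right)
    then show ?thesis by (simp add: algebra_simps add_divide_distrib)
  qed
  have i1: "(\<lambda>t. (dp t \<bullet> fst (x t) + snd (x t) \<bullet> dq t) / 2) integrable_on {s..s'}"
  proof (cases "s \<le> s'")
    case True
    show ?thesis
      by (rule has_integral_integrable[OF fundamental_theorem_of_calculus[OF True]])
         (auto intro: has_vector_derivative_at_within K)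
  next
    case False then have "{s..s'} = {}" by simp
    then show ?thesis by (simp only:) (rule integrable_on_empty)
  qed
  have cq: "continuous_on UNIV (\<lambda>t. fst (x t))"
    using D1 by (meson continuous_at_imp_continuous_on has_vector_derivative_continuous)
  have i2: "(\<lambda>t. (m/2) * (g t \<bullet> fst (x t))) integrable_on {s..s'}"
    by (rule integrable_continuous_interval)
       (intro continuous_intros continuous_on_subset[OF cg] continuous_on_subset[OF cq]; simp)
  show ?thesis unfolding eq[abs_def] by (rule integrable_add[OF i1 i2])
qed

lemma segment:
  assumes F: "admissible_fields G Gam Om g" and ma: "ma \<noteq> 0" and mb: "mb \<noteq> 0"
    and Ha: "hamilton_solution G Gam Om g ma xa" and Hb: "hamilton_solution G Gam Om g mb xb"
    and st: "s \<le> s'"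
  shows "classical_action G Gam Om g mb xb s s' = (mb/ma) * classical_action G Gam Om g ma xa s s'
     + ((mb/ma) *\<^sub>R snd (xa s') + snd (xb s')) \<bullet> (fst (xb s') - fst (xa s')) / 2
     - ((mb/ma) *\<^sub>R snd (xa s) + snd (xb s)) \<bullet> (fst (xb s) - fst (xa s)) / 2"
proof -
  define Fn where "Fn t = ((mb/ma) *\<^sub>R snd (xa t) + snd (xb t)) \<bullet> (fst (xb t) - fst (xa t)) / 2" for t
  define dqa where "dqa t = (1/ma) *\<^sub>R (G t *v snd (xa t)) - cross3 (Om t) (fst (xa t))" for t
  define dpa where "dpa t = ma *\<^sub>R (Gam t *v fst (xa t)) + cross3 (snd (xa t)) (Om t) + ma *\<^sub>R g t" for t
  define dqb where "dqb t = (1/mb) *\<^sub>R (G t *v snd (xb t)) - cross3 (Om t) (fst (xb t))" for t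
  define dpb where "dpb t = mb *\<^sub>R (Gam t *v fst (xb t)) + cross3 (snd (xb t)) (Om t) + mb *\<^sub>R g t" for t
  have A1: "\<And>t. ((\<lambda>\<tau>. fst (xa \<tau>)) has_vector_derivative dqa t) (at t)"
    unfolding dqa_def by (rule traj_deriv(1)[OF F ma Ha])
  have A2: "\<And>t. ((\<lambda>\<tau>. snd (xa \<tau>)) has_vector_derivative dpa t) (at t)"
    unfolding dpa_def by (rule traj_deriv(2)[OF F ma Ha])
  have B1: "\<And>t. ((\<lambda>\<tau>. fst (xb \<tau>)) has_vector_derivative dqb t) (at t)"
    unfolding dqb_def by (rule traj_deriv(1)[OF F mb Hb])
  have B2: "\<And>t. ((\<lambda>\<tau>. snd (xb \<tau>)) has_vector_derivative dpb t) (at t)"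
    unfolding dpb_def by (rule traj_deriv(2)[OF F mb Hb])
  have sG: "\<And>t. transpose (G t) = G t" and sGm: "\<And>t. transpose (Gam t) = Gam t"
    using F unfolding admissible_fields_def by auto
  have pt: "Lag G Gam Om g mb xb t - (mb/ma) * Lag G Gam Om g ma xa t
     = (((mb/ma) *\<^sub>R dpa t + dpb t) \<bullet> (fst (xb t) - fst (xa t)) + ((mb/ma) *\<^sub>R snd (xa t) + snd (xb t)) \<bullet> (dqb t - dqa t)) / 2" for t
    unfolding Lag_def vector_derivative_at[OF A1] vector_derivative_at[OF B1] hamiltonian_def
    by (rule alg_F[OF sG sGm ma mb, symmetric]) (simp_all add: dqa_def dpa_def dqb_def dpb_def)
  have DF: "(Fn has_vector_derivative (Lag G Gam Om g mb xb t - (mb/ma) * Lag G Gam Om g ma xa t)) (at t)" for t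
  proof -
    have v1: "((\<lambda>t. (mb/ma) *\<^sub>R snd (xa t) + snd (xb t)) has_vector_derivative ((mb/ma) *\<^sub>R dpa t + dpb t)) (at t)"
      by (intro has_vector_derivative_add bounded_linear.has_vector_derivative[OF bounded_linear_scaleR_right] A2 B2)
    have v2: "((\<lambda>t. fst (xb t) - fst (xa t)) has_vector_derivative (dqb t - dqa t)) (at t)"
      by (intro has_vector_derivative_diff A1 B1)
    have "((\<lambda>t. (1/2) * (((mb/ma) *\<^sub>R snd (xa t) + snd (xb t)) \<bullet> (fst (xb t) - fst (xa t)))) has_vector_derivative
       (1/2) * (((mb/ma) *\<^sub>R snd (xa t) + snd (xb t)) \<bullet> (dqb t - dqa t) + ((mb/ma) *\<^sub>R dpa t + dpb t) \<bullet> (fst (xb t) - fst (xa t)))) (at t)"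
      by (rule has_vector_derivative_mult_right[OF hvd_inner[OF v1 v2]])
    moreover have "Fn = (\<lambda>t. (1/2) * (((mb/ma) *\<^sub>R snd (xa t) + snd (xb t)) \<bullet> (fst (xb t) - fst (xa t))))"
      by (simp add: Fn_def fun_eq_iff)
    ultimately show ?thesis unfolding pt by (simp add: add.commute)
  qed
  have h1: "(Lag G Gam Om g mb xb has_integral classical_action G Gam Om g mb xb s s') {s..s'}"
    unfolding ca_Lag
    by (rule integrable_integral[OF Lag_integrable[OF F mb Hb]])
  have h2: "(Lag G Gam Om g ma xa has_integral classical_action G Gam Om g ma xa s s') {s..s'}"
    unfolding ca_Lag
    by (rule integrable_integral[OF Lag_integrable[OF F ma Ha]])
  have h3: "((\<lambda>t. Lag G Gam Om g mb xb t - (mb/ma) * Lag G Gam Om g ma xa t) has_integral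
     (classical_action G Gam Om g mb xb s s' - (mb/ma) * classical_action G Gam Om g ma xa s s')) {s..s'}"
    by (intro has_integral_diff h1 has_integral_mult_right h2)
  have h4: "((\<lambda>t. Lag G Gam Om g mb xb t - (mb/ma) * Lag G Gam Om g ma xa t) has_integral (Fn s' - Fn s)) {s..s'}"
    by (rule fundamental_theorem_of_calculus[OF st]) (meson DF has_vector_derivative_at_within)
  from has_integral_unique[OF h3 h4] show ?thesis unfolding Fn_def by linarith
qed
theorem theorem2:
  fixes hbar :: real and N :: nat and t :: "nat \<Rightarrow> real"
    and G Gam :: "real \<Rightarrow> real^3^3" and Om g :: "real \<Rightarrow> real^3"
    and ma mb :: "nat \<Rightarrow> real" and ka kb :: "nat \<Rightarrow> real^3"
    and wa wb fa fb :: "nat \<Rightarrow> real"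
    and qa pa qb pb :: "nat \<Rightarrow> real^3"
    and xa xb :: "nat \<Rightarrow> real \<Rightarrow> (real^3) \<times> (real^3)"
    and XD YD :: "complex^3^3" and r :: "real^3"
  assumes hbar: "hbar > 0"
    and N: "N \<ge> 1"
    and times: "\<forall>i\<in>{1..N}. t i < t (Suc i)"
    and fields: "admissible_fields G Gam Om g"
    and masses: "\<forall>i\<in>{1..N}. ma i > 0 \<and> mb i > 0"
    and traj_a: "\<forall>i\<in>{1..N}. hamilton_solution G Gam Om g (ma i) (xa i)
                   \<and> xa i (t i) = (qa i, pa i + hbar *\<^sub>R ka i)
                   \<and> xa i (t (Suc i)) = (qa (Suc i), pa (Suc i))"
    and traj_b: "\<forall>i\<in>{1..N}. hamilton_solution G Gam Om g (mb i) (xb i)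
                   \<and> xb i (t i) = (qb i, pb i + hbar *\<^sub>R kb i)
                   \<and> xb i (t (Suc i)) = (qb (Suc i), pb (Suc i))"
    and XD: "invertible XD"
  shows "output_phase hbar N t mb kb wb fb
            (\<lambda>i. classical_action G Gam Om g (mb i) (xb i) (t i) (t (Suc i))) qb pb XD YD r
       - output_phase hbar N t ma ka wa fa
            (\<lambda>i. classical_action G Gam Om g (ma i) (xa i) (t i) (t (Suc i))) qa pa XD YD r
     = ((pb (N+1) - pa (N+1)) \<bullet> (r - (1/2) *\<^sub>R (qa (N+1) + qb (N+1)))) / hbar
       - ((pa 1 + pb 1) \<bullet> (qb 1 - qa 1)) / (2 * hbar)
       + (\<Sum>i=1..N. (kb i - ka i) \<bullet> ((1/2) *\<^sub>R (qa i + qb i))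
                    - (wb i - wa i) * t i - (fb i - fa i))
       + (\<Sum>i=1..N. (mb i / ma i - 1) *
            (classical_action G Gam Om g (ma i) (xa i) (t i) (t (Suc i)) / hbar
             + (pa (Suc i) \<bullet> (qb (Suc i) - qa (Suc i))) / (2 * hbar)
             - ((pa i + hbar *\<^sub>R ka i) \<bullet> (qb i - qa i)) / (2 * hbar)))
       + mb N / (2 * hbar) * ((r - qb (N+1)) \<bullet> (Re_mat (YD ** matrix_inv XD) *v (r - qb (N+1))))
       - ma N / (2 * hbar) * ((r - qa (N+1)) \<bullet> (Re_mat (YD ** matrix_inv XD) *v (r - qa (N+1))))"
proof -
  let ?Sa = "\<lambda>i. classical_action G Gam Om g (ma i) (xa i) (t i) (t (Suc i))"
  let ?Sb = "\<lambda>i. classical_action G Gam Om g (mb i) (xb i) (t i) (t (Suc i))"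
  define X where "X i = (pa i + pb i) \<bullet> (qb i - qa i) / 2" for i
  have hb0: "hbar \<noteq> 0" using hbar by simp
  have per: "?Sb i / hbar + kb i \<bullet> qb i - wb i * t i - fb i - (?Sa i / hbar + ka i \<bullet> qa i - wa i * t i - fa i)
     = ((kb i - ka i) \<bullet> ((1/2) *\<^sub>R (qa i + qb i)) - (wb i - wa i) * t i - (fb i - fa i))
       + (mb i / ma i - 1) *
            (?Sa i / hbar
             + (pa (Suc i) \<bullet> (qb (Suc i) - qa (Suc i))) / (2 * hbar)
             - ((pa i + hbar *\<^sub>R ka i) \<bullet> (qb i - qa i)) / (2 * hbar))
       + (X (Suc i) - X i) / hbar" if i: "i \<in> {1..N}" for i
  proof -
    have mm: "ma i > 0 \<and> mb i > 0" using masses i by blast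
    then have ma: "ma i \<noteq> 0" and mb: "mb i \<noteq> 0" by auto
    have ta: "hamilton_solution G Gam Om g (ma i) (xa i)" "xa i (t i) = (qa i, pa i + hbar *\<^sub>R ka i)"
       "xa i (t (Suc i)) = (qa (Suc i), pa (Suc i))" using traj_a i by auto
    have tb: "hamilton_solution G Gam Om g (mb i) (xb i)" "xb i (t i) = (qb i, pb i + hbar *\<^sub>R kb i)"
       "xb i (t (Suc i)) = (qb (Suc i), pb (Suc i))" using traj_b i by auto
    have "t i < t (Suc i)" using times i by blast
    then have st: "t i \<le> t (Suc i)" by simp
    have S: "?Sb i = (mb i / ma i) * ?Sa i
      + ((mb i / ma i) *\<^sub>R pa (Suc i) + pb (Suc i)) \<bullet> (qb (Suc i) - qa (Suc i)) / 2
      - ((mb i / ma i) *\<^sub>R (pa i + hbar *\<^sub>R ka i) + (pb i + hbar *\<^sub>R kb i)) \<bullet> (qb i - qa i) / 2"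
      using segment[OF fields ma mb ta(1) tb(1) st] ta(2,3) tb(2,3) by simp
    show ?thesis unfolding S X_def using hb0 ma
      by (simp add: inner_add_left inner_add_right inner_diff_left inner_diff_right field_simps inner_commute)
  qed
  have tel: "(\<Sum>i=1..N. X (Suc i) - X i) = X (Suc N) - X 1"
    using N by (simp add: sum_Suc_diff)
  have sumeq: "(\<Sum>i=1..N. ?Sb i / hbar + kb i \<bullet> qb i - wb i * t i - fb i) - (\<Sum>i=1..N. ?Sa i / hbar + ka i \<bullet> qa i - wa i * t i - fa i)
    = (\<Sum>i=1..N. (kb i - ka i) \<bullet> ((1/2) *\<^sub>R (qa i + qb i)) - (wb i - wa i) * t i - (fb i - fa i))
       + (\<Sum>i=1..N. (mb i / ma i - 1) *
            (?Sa i / hbar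
             + (pa (Suc i) \<bullet> (qb (Suc i) - qa (Suc i))) / (2 * hbar)
             - ((pa i + hbar *\<^sub>R ka i) \<bullet> (qb i - qa i)) / (2 * hbar)))
       + (X (Suc N) - X 1) / hbar"
  proof -
    have "(\<Sum>i=1..N. ?Sb i / hbar + kb i \<bullet> qb i - wb i * t i - fb i) - (\<Sum>i=1..N. ?Sa i / hbar + ka i \<bullet> qa i - wa i * t i - fa i)
      = (\<Sum>i=1..N. ?Sb i / hbar + kb i \<bullet> qb i - wb i * t i - fb i - (?Sa i / hbar + ka i \<bullet> qa i - wa i * t i - fa i))"
      by (simp add: sum_subtractf)
    also have "\<dots> = (\<Sum>i=1..N. ((kb i - ka i) \<bullet> ((1/2) *\<^sub>R (qa i + qb i)) - (wb i - wa i) * t i - (fb i - fa i))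
       + (mb i / ma i - 1) *
            (?Sa i / hbar
             + (pa (Suc i) \<bullet> (qb (Suc i) - qa (Suc i))) / (2 * hbar)
             - ((pa i + hbar *\<^sub>R ka i) \<bullet> (qb i - qa i)) / (2 * hbar))
       + (X (Suc i) - X i) / hbar)"
      by (rule sum.cong[OF refl]) (rule per)
    also have "\<dots> = (\<Sum>i=1..N. (kb i - ka i) \<bullet> ((1/2) *\<^sub>R (qa i + qb i)) - (wb i - wa i) * t i - (fb i - fa i))
       + (\<Sum>i=1..N. (mb i / ma i - 1) *
            (?Sa i / hbar
             + (pa (Suc i) \<bullet> (qb (Suc i) - qa (Suc i))) / (2 * hbar)
             - ((pa i + hbar *\<^sub>R ka i) \<bullet> (qb i - qa i)) / (2 * hbar)))
       + (\<Sum>i=1..N. X (Suc i) - X i) / hbar"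
      by (simp add: sum.distrib sum_divide_distrib)
    finally show ?thesis unfolding tel .
  qed
  have endp: "(pb (N+1) \<bullet> (r - qb (N+1))) / hbar - (pa (N+1) \<bullet> (r - qa (N+1))) / hbar + (X (Suc N) - X 1) / hbar
     = ((pb (N+1) - pa (N+1)) \<bullet> (r - (1/2) *\<^sub>R (qa (N+1) + qb (N+1)))) / hbar
       - ((pa 1 + pb 1) \<bullet> (qb 1 - qa 1)) / (2 * hbar)"
    unfolding X_def using hb0
    by (simp add: inner_add_left inner_add_right inner_diff_left inner_diff_right field_simps inner_commute)
  show ?thesis
    unfolding output_phase_def
    using sumeq endp by linarith
qed

end
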